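(* Let $\Gamma\subset\mathbb{R}$ satisfy property (C). Then for every $0<\epsilon<1$ there exist $N\in\mathbb{N}$ and $\eta_1,\dots,\eta_N\in\Gamma$ such that the exponential polynomial $P(t)=\frac{1}{N}\sum_{j=1}^N e^{i\eta_j t}$ satisfies $|P(t)|\leq\epsilon$ for all $t$ with $\epsilon<|t|<1/\epsilon$.
   Context: Property (C) of a set $\Gamma$: for every $m\in\mathbb{N}$ there are rationally independent numbers $q_1,\dots,q_m$ such that for every $N\in\mathbb{N}$ there exist $a_1,\dots,a_m$ with $\bigcup_{j=1}^m\{a_j+q_j,a_j+2q_j,\dots,a_j+Nq_j\}\subset\Gamma$. *)

theory Defs
  imports Complex_Main
begin

definition rationally_independent :: "(nat \<Rightarrow> real) \<Rightarrow> nat \<Rightarrow> bool" where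
  "rationally_independent q m \<longleftrightarrow>
     (\<forall>c :: nat \<Rightarrow> rat. (\<Sum>j=1..m. of_rat (c j) * q j) = 0 \<longrightarrow> (\<forall>j\<in>{1..m}. c j = 0))"

definition property_C :: "real set \<Rightarrow> bool" where
  "property_C \<Gamma> \<longleftrightarrow>
     (\<forall>m::nat. \<exists>q :: nat \<Rightarrow> real. rationally_independent q m \<and>
        (\<forall>N::nat. \<exists>a :: nat \<Rightarrow> real.
           (\<Union>j\<in>{1..m}. {a j + real k * q j | k. k \<in> {1..N}}) \<subseteq> \<Gamma>))"

end

theory Submission imports Defs "HOL-Analysis.Analysis" begin

lemma geo_bound:
  fixes z :: complex assumes "norm z = 1" "z \<noteq> 1"
  shows "norm (\<Sum>k<N. z^k) \<le> 2 / norm (z - 1)"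
proof -
  have e: "(\<Sum>k<N. z^k) = (z^N - 1)/(z - 1)" using geometric_sum assms by blast
  have "norm (z^N - 1) \<le> norm (z^N) + norm (1::complex)" by (rule norm_triangle_ineq4)
  also have "\<dots> = 2" using assms by (simp add: norm_power)
  finally have "norm (z^N - 1) \<le> 2" .
  moreover have "norm (z - 1) > 0" using assms by simp
  ultimately show ?thesis unfolding e norm_divide by (simp add: divide_right_mono)
qed

lemma triv_bound:
  fixes z :: complex assumes "norm z = 1"
  shows "norm (\<Sum>k<N. z^k) \<le> real N"
proof -
  have "norm (\<Sum>k<N. z^k) \<le> (\<Sum>k<N. norm (z^k))" by (rule norm_sum)
  also have "\<dots> = real N" using assms by (simp add: norm_power)
  finally show ?thesis .
qed

lemma inner_eq:
  "(\<Sum>k<N. exp (\<i> * complex_of_real ((a + real (Suc k) * q) * t))) =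
    exp (\<i> * complex_of_real (a*t)) * exp (\<i> * complex_of_real (q*t)) * (\<Sum>k<N. exp (\<i> * complex_of_real (q*t))^k)"
proof -
  have "exp (\<i> * complex_of_real ((a + real (Suc k) * q) * t)) =
    exp (\<i> * complex_of_real (a*t)) * exp (\<i> * complex_of_real (q*t)) * exp (\<i> * complex_of_real (q*t))^k" for k
  proof -
    have "\<i> * complex_of_real ((a + real (Suc k) * q) * t) = \<i> * complex_of_real (a*t) + of_nat (Suc k) * (\<i> * complex_of_real (q*t))"
      by (simp add: algebra_simps)
    then have "exp (\<i> * complex_of_real ((a + real (Suc k) * q) * t)) = exp (\<i> * complex_of_real (a*t)) * exp (\<i> * complex_of_real (q*t))^(Suc k)"
      by (simp only: exp_add exp_of_nat_mult)
    then show ?thesis by simp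
  qed
  then show ?thesis by (simp add: sum_distrib_left)
qed

lemma inner_bound:
  assumes "0 < c" 
  shows "cmod (\<Sum>k<N. exp (\<i> * complex_of_real ((a + real (Suc k) * q) * t))) \<le>
    (if cmod (exp (\<i> * complex_of_real (q*t)) - 1) < c then real N else 2 / c)"
proof -
  let ?z = "exp (\<i> * complex_of_real (q*t))"
  have n: "cmod (\<Sum>k<N. exp (\<i> * complex_of_real ((a + real (Suc k) * q) * t))) = cmod (\<Sum>k<N. ?z^k)"
    unfolding inner_eq by (simp add: norm_mult)
  show ?thesis
  proof (cases "cmod (?z - 1) < c")
    case True then show ?thesis using n triv_bound[of ?z N] by simp
  next
    case False
    then have ne: "?z \<noteq> 1" using assms by auto
    have "cmod (\<Sum>k<N. ?z^k) \<le> 2 / cmod (?z - 1)" using geo_bound[OF _ ne] by simp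
    also have "\<dots> \<le> 2 / c" using False assms by (intro divide_left_mono) (auto intro!: mult_pos_pos)
    finally show ?thesis using n False by simp
  qed
qed

lemma pair_pos:
  assumes ind: "rationally_independent q m" and j: "j\<in>{1..m}" and l: "l\<in>{1..m}" and jl: "j\<noteq>l"
    and t: "t \<noteq> 0"
  shows "exp (\<i> * complex_of_real (q j * t)) \<noteq> 1 \<or> exp (\<i> * complex_of_real (q l * t)) \<noteq> 1"
proof (rule ccontr)
  assume "\<not> ?thesis"
  then obtain nj nl :: int where hj: "q j * t = of_int (2*nj) * pi" and hl: "q l * t = of_int (2*nl) * pi"
    by (auto simp: exp_eq_1)
  define c :: "nat \<Rightarrow> rat" where "c = (\<lambda>i. (if i = j then of_int nl else 0) + (if i = l then - of_int nj else 0))"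
  have "(\<Sum>i=1..m. of_rat (c i) * q i) = (\<Sum>i=1..m. (if i = j then of_int nl * q j else 0) + (if i = l then - of_int nj * q l else 0))"
    by (rule sum.cong) (auto simp: c_def of_rat_add of_rat_minus distrib_right)
  also have "\<dots> = of_int nl * q j - of_int nj * q l" using j l by (simp add: sum.distrib)
  finally have s: "(\<Sum>i=1..m. of_rat (c i) * q i) = of_int nl * q j - of_int nj * q l" .
  have "(of_int nl * q j - of_int nj * q l) * t = of_int nl * (q j * t) - of_int nj * (q l * t)"
    by (simp add: algebra_simps)
  also have "\<dots> = 0" unfolding hj hl by (simp add: algebra_simps)
  finally have "(of_int nl * q j - of_int nj * q l) * t = 0" .
  then have "of_int nl * q j - of_int nj * q l = 0" using t by simp
  then have "\<forall>i\<in>{1..m}. c i = 0" using ind s unfolding rationally_independent_def by metis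
  then have "c j = 0" "c l = 0" using j l by auto
  then have "nl = 0" "nj = 0" using jl by (auto simp: c_def)
  then have qj: "q j = 0" using hj t by simp
  define c' :: "nat \<Rightarrow> rat" where "c' = (\<lambda>i. if i = j then 1 else 0)"
  have "(\<Sum>i=1..m. of_rat (c' i) * q i) = (\<Sum>i=1..m. if i = j then q j else 0)"
    by (rule sum.cong) (auto simp: c'_def)
  also have "\<dots> = 0" using qj by simp
  finally have "c' j = 0" using ind j unfolding rationally_independent_def by metis
  then show False by (simp add: c'_def)
qed



lemma pair_unif:
  assumes K: "compact K" "0 \<notin> K" and ind: "rationally_independent q m" and j: "j\<in>{1..m}" and l: "l\<in>{1..m}" and jl: "j\<noteq>l"
  shows "\<exists>c>0. \<forall>t\<in>K. c \<le> cmod (exp (\<i> * complex_of_real (q j * t)) - 1) \<or> c \<le> cmod (exp (\<i> * complex_of_real (q l * t)) - 1)"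
proof (cases "K = {}")
  case True then show ?thesis by (intro exI[of _ 1]) auto
next
  case False
  define h where "h t = cmod (exp (\<i> * complex_of_real (q j * t)) - 1) + cmod (exp (\<i> * complex_of_real (q l * t)) - 1)" for t
  have "continuous_on K h" unfolding h_def by (intro continuous_intros)
  then obtain t0 where t0: "t0\<in>K" "\<forall>t\<in>K. h t0 \<le> h t" using continuous_attains_inf[OF K(1) False] by blast
  have "t0 \<noteq> 0" using t0 K(2) by auto
  then have "exp (\<i> * complex_of_real (q j * t0)) \<noteq> 1 \<or> exp (\<i> * complex_of_real (q l * t0)) \<noteq> 1"
    using pair_pos[OF ind j l jl] by blast
  then have pos: "h t0 > 0" unfolding h_def
    by (auto intro: add_pos_nonneg add_nonneg_pos)
  show ?thesis
  proof (intro exI[of _ "h t0/2"] conjI ballI)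
    show "0 < h t0 / 2" using pos by simp
  next
    fix t assume "t \<in> K"
    then have ht: "h t0 \<le> h t" using t0 by blast
    have "h t = cmod (exp (\<i> * complex_of_real (q j * t)) - 1) + cmod (exp (\<i> * complex_of_real (q l * t)) - 1)"
      by (simp add: h_def)
    then show "h t0 / 2 \<le> cmod (exp (\<i> * complex_of_real (q j * t)) - 1) \<or> h t0 / 2 \<le> cmod (exp (\<i> * complex_of_real (q l * t)) - 1)"
      using ht by linarith
  qed
qed

lemma all_pairs:
  assumes K: "compact K" "0 \<notin> K" and ind: "rationally_independent q m"
  shows "\<exists>c>0. \<forall>j\<in>{1..m}. \<forall>l\<in>{1..m}. j \<noteq> l \<longrightarrow> (\<forall>t\<in>K. c \<le> cmod (exp (\<i> * complex_of_real (q j * t)) - 1) \<or> c \<le> cmod (exp (\<i> * complex_of_real (q l * t)) - 1))"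
proof -
  define P where "P c p \<longleftrightarrow> (fst p \<noteq> snd p \<longrightarrow> (\<forall>t\<in>K. c \<le> cmod (exp (\<i> * complex_of_real (q (fst p) * t)) - 1) \<or> c \<le> cmod (exp (\<i> * complex_of_real (q (snd p) * t)) - 1)))" for c :: real and p :: "nat \<times> nat"
  have ev: "eventually (\<lambda>c. P c p) (at_right 0)" if p: "p \<in> {1..m} \<times> {1..m}" for p
  proof (cases "fst p = snd p")
    case True then show ?thesis by (simp add: P_def)
  next
    case False
    obtain c0 where c0: "c0 > 0" "P c0 p" using pair_unif[OF K ind, of "fst p" "snd p"] p False
      unfolding P_def by (auto simp: mem_Times_iff)
    show ?thesis unfolding eventually_at_right_field
    proof (intro exI[of _ c0] conjI allI impI)
      show "0 < c0" by fact
    next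
      fix y :: real assume "0 < y" "y < c0"
      then show "P y p" using c0(2) unfolding P_def by force
    qed
  qed
  have "eventually (\<lambda>c. \<forall>p\<in>{1..m} \<times> {1..m}. P c p) (at_right 0)"
    by (rule eventually_ball_finite) (use ev in auto)
  then obtain b :: real where b: "b > 0" "\<forall>y>0. y < b \<longrightarrow> (\<forall>p\<in>{1..m} \<times> {1..m}. P y p)"
    unfolding eventually_at_right_field by blast
  then have "\<forall>p\<in>{1..m} \<times> {1..m}. P (b/2) p" by simp
  then show ?thesis using b(1) unfolding P_def
    by (intro exI[of _ "b/2"]) (auto simp: mem_Times_iff)
qed

lemma regroup:
  fixes f :: "nat \<Rightarrow> 'a::comm_monoid_add"
  shows "(\<Sum>i<m*N. f i) = (\<Sum>j<m. \<Sum>k<N. f (j*N+k))"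
proof -
  have "(\<Sum>i<m*N. f i) = (\<Sum>j<m. sum f {j*N..<j*N+N})" using sum.nat_group[of f N m] by simp
  also have "\<dots> = (\<Sum>j<m. \<Sum>k<N. f (j*N+k))"
  proof (rule sum.cong[OF refl])
    fix j
    have "sum f {0 + j*N..<N + j*N} = (\<Sum>k\<in>{0..<N}. f (k + j*N))" by (rule sum.shift_bounds_nat_ivl)
    then show "sum f {j*N..<j*N+N} = (\<Sum>k<N. f (j*N+k))"
      by (simp add: atLeast0LessThan add.commute)
  qed
  finally show ?thesis .
qed

theorem lemma5:
  fixes \<Gamma> :: "real set" and \<epsilon> :: real
  assumes "property_C \<Gamma>"
    and "0 < \<epsilon>" and "\<epsilon> < 1"
  shows "\<exists>N::nat. N \<ge> 1 \<and> (\<exists>\<eta> :: nat \<Rightarrow> real. (\<forall>j\<in>{1..N}. \<eta> j \<in> \<Gamma>) \<and>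
           (\<forall>t::real. \<epsilon> < \<bar>t\<bar> \<and> \<bar>t\<bar> < 1 / \<epsilon> \<longrightarrow>
              cmod ((1 / of_nat N) * (\<Sum>j=1..N. exp (\<i> * complex_of_real (\<eta> j * t)))) \<le> \<epsilon>))"
proof -
  define m where "m = nat \<lceil>2/\<epsilon>\<rceil> + 1"
  have m1: "m \<ge> 1" by (simp add: m_def)
  have "real m \<ge> 2/\<epsilon>" unfolding m_def by linarith
  then have m\<epsilon>: "1 / real m \<le> \<epsilon>/2" using assms(2) m1
    by (simp add: field_simps)
  obtain q where ind: "rationally_independent q m" and
    ap: "\<forall>N::nat. \<exists>a :: nat \<Rightarrow> real. (\<Union>j\<in>{1..m}. {a j + real k * q j | k. k \<in> {1..N}}) \<subseteq> \<Gamma>"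
    using assms(1) unfolding property_C_def by blast
  define K where "K = cball (0::real) (1/\<epsilon>) - ball 0 \<epsilon>"
  have cK: "compact K" by (simp add: K_def compact_diff)
  have K0: "0 \<notin> K" using assms by (simp add: K_def)
  obtain c where c: "c > 0" "\<forall>j\<in>{1..m}. \<forall>l\<in>{1..m}. j \<noteq> l \<longrightarrow> (\<forall>t\<in>K. c \<le> cmod (exp (\<i> * complex_of_real (q j * t)) - 1) \<or> c \<le> cmod (exp (\<i> * complex_of_real (q l * t)) - 1))"
    using all_pairs[OF cK K0 ind] by blast
  define N where "N = nat \<lceil>4/(c*\<epsilon>)\<rceil> + 1"
  have N1: "N \<ge> 1" by (simp add: N_def)
  have "real N \<ge> 4/(c*\<epsilon>)" unfolding N_def by linarith
  then have N\<epsilon>: "2 / (c * real N) \<le> \<epsilon>/2" using assms(2) c(1) N1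
    by (simp add: field_simps)
  obtain a where a: "(\<Union>j\<in>{1..m}. {a j + real k * q j | k. k \<in> {1..N}}) \<subseteq> \<Gamma>" using ap by blast
  define \<eta> where "\<eta> i = a ((i-1) div N + 1) + real ((i-1) mod N + 1) * q ((i-1) div N + 1)" for i
  show ?thesis
  proof (intro exI[of _ "m*N"] conjI exI[of _ \<eta>] ballI allI impI)
    show "1 \<le> m*N" using m1 N1 by simp
  next
    fix i assume i: "i \<in> {1..m*N}"
    have "i - 1 < m * N" using i by auto
    then have d: "(i-1) div N < m" by (rule less_mult_imp_div_less)
    have md: "(i-1) mod N < N" using N1 by simp
    have "\<eta> i \<in> {a ((i-1) div N + 1) + real k * q ((i-1) div N + 1) | k. k \<in> {1..N}}"
      unfolding \<eta>_def using md by force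
    moreover have "(i-1) div N + 1 \<in> {1..m}" using d by simp
    ultimately show "\<eta> i \<in> \<Gamma>" using a by blast
  next
    fix t :: real assume t: "\<epsilon> < \<bar>t\<bar> \<and> \<bar>t\<bar> < 1 / \<epsilon>"
    then have tK: "t \<in> K" by (auto simp: K_def dist_real_def)
    define z where "z j = exp (\<i> * complex_of_real (q (Suc j) * t))" for j
    have dm: "(j*N+k) div N = j" "(j*N+k) mod N = k" if "k < N" for j k
      using that N1 by auto
    have "(\<Sum>j=1..m*N. exp (\<i> * complex_of_real (\<eta> j * t))) = (\<Sum>i<m*N. exp (\<i> * complex_of_real (\<eta> (Suc i) * t)))"
      by (simp add: sum.atLeast1_atMost_eq)
    also have "\<dots> = (\<Sum>j<m. \<Sum>k<N. exp (\<i> * complex_of_real (\<eta> (Suc (j*N+k)) * t)))" by (rule regroup)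
    also have "\<dots> = (\<Sum>j<m. \<Sum>k<N. exp (\<i> * complex_of_real ((a (Suc j) + real (Suc k) * q (Suc j)) * t)))"
      by (intro sum.cong refl) (simp add: \<eta>_def dm)
    finally have S: "(\<Sum>j=1..m*N. exp (\<i> * complex_of_real (\<eta> j * t))) = (\<Sum>j<m. \<Sum>k<N. exp (\<i> * complex_of_real ((a (Suc j) + real (Suc k) * q (Suc j)) * t)))" .
    obtain j0 where j0: "\<forall>j<m. j \<noteq> j0 \<longrightarrow> \<not> cmod (z j - 1) < c"
    proof (cases "\<exists>j<m. cmod (z j - 1) < c")
      case True then obtain j0 where j0: "j0<m" "cmod (z j0 - 1) < c" by blast
      have "\<forall>j<m. j \<noteq> j0 \<longrightarrow> \<not> cmod (z j - 1) < c"
      proof (intro allI impI)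
        fix j assume "j < m" "j \<noteq> j0"
        then have "c \<le> cmod (z j - 1) \<or> c \<le> cmod (z j0 - 1)"
          using c(2) tK j0(1) unfolding z_def by auto
        then show "\<not> cmod (z j - 1) < c" using j0(2) by linarith
      qed
      then show ?thesis using that by blast
    next
      case False then show ?thesis using that by blast
    qed
    have "cmod (\<Sum>j=1..m*N. exp (\<i> * complex_of_real (\<eta> j * t))) \<le> (\<Sum>j<m. cmod (\<Sum>k<N. exp (\<i> * complex_of_real ((a (Suc j) + real (Suc k) * q (Suc j)) * t))))"
      unfolding S by (rule norm_sum)
    also have "\<dots> \<le> (\<Sum>j<m. (if cmod (z j - 1) < c then real N else 2/c))"
      unfolding z_def by (rule sum_mono) (rule inner_bound[OF c(1)])
    also have "\<dots> \<le> (\<Sum>j<m. (if j = j0 then real N else 0) + 2/c)"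
      by (rule sum_mono) (use j0 c(1) in auto)
    also have "\<dots> \<le> real N + real m * (2/c)"
      by (simp add: sum.distrib)
    finally have T: "cmod (\<Sum>j=1..m*N. exp (\<i> * complex_of_real (\<eta> j * t))) \<le> real N + real m * (2/c)" .
    have "cmod (1 / of_nat (m*N) * (\<Sum>j=1..m*N. exp (\<i> * complex_of_real (\<eta> j * t))))
        = cmod (\<Sum>j=1..m*N. exp (\<i> * complex_of_real (\<eta> j * t))) / real (m*N)"
      by (simp add: norm_mult norm_divide)
    also have "\<dots> \<le> (real N + real m * (2/c)) / real (m*N)"
      by (rule divide_right_mono[OF T]) simp
    also have "\<dots> = 1 / real m + 2 / (c * real N)"
      using m1 N1 c(1) by (simp add: field_simps)
    also have "\<dots> \<le> \<epsilon>" using m\<epsilon> N\<epsilon> by linarith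
    finally show "cmod (1 / of_nat (m*N) * (\<Sum>j=1..m*N. exp (\<i> * complex_of_real (\<eta> j * t)))) \<le> \<epsilon>" .
  qed
qed
end
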